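(* Let $n,m\ge1$, let $V'$ and $W'$ be complex Hilbert spaces with $\dim V'=n$ and $\dim W'=m$, let $\varepsilon\in\{0,1\}$, and let $R\in End\big((V'\otimes W')^{\otimes 2}\big)$ be defined by $$R(v\otimes w\otimes v'\otimes w')=(-1)^\varepsilon\, v'\otimes w\otimes v\otimes w'\qquad(v,v'\in V',\ w,w'\in W').$$ Then $R$ is an $R$-matrix, and its Thoma parameters are $\alpha_1=\dots=\alpha_n=\frac1n$ (all other $\alpha_i=0$), $\beta=0$ if $\varepsilon=0$; and $\alpha=0$, $\beta_1=\dots=\beta_n=\frac1n$ (all other $\beta_i=0$) if $\varepsilon=1$.
   Context: For a finite-dimensional Hilbert space $E$ of dimension $D$, an $R$-matrix is $R\in End(E\otimes E)$ with $R^2=1$ and $(R\otimes1)(1\otimes R)(R\otimes1)=(1\otimes R)(R\otimes1)(1\otimes R)$. Its Yang-Baxter representation $\rho_R$ of $\mathfrak{S}_\infty$ sends $\sigma_i=(i\ i{+}1)$ to $1^{\otimes i-1}\otimes R\otimes1\otimes\cdots\in\bigotimes_{k\ge1}End(E)$, and its Yang-Baxter character is $\chi_R=\tau\circ\rho_R$ with $\tau=\bigotimes_{k\ge1}\frac{\mathrm{Tr}}{D}$. Extremal characters of $\mathfrak{S}_\infty$ are in bijection (Thoma) with pairs of nonincreasing nonnegative sequences $(\alpha,\beta)$ with $\sum_i\alpha_i+\beta_i\le1$, via $\chi(c_k)=\sum_i\alpha_i^k+(-1)^{k-1}\beta_i^k$ for $k\ge2$, where $c_k=(1\,2\,\cdots\,k)$;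 the Thoma parameters of $R$ are the pair $(\alpha,\beta)$ corresponding to $\chi_R$. *)

theory Defs
  imports Complex_Main
begin

text \<open>A finite-dimensional Hilbert space E is represented by an orthonormal basis,
  indexed by a finite set S.  A vector of E^(tensor N) is indexed by basis words:
  lists of length N with entries in S.  Operators on E^(tensor N) are matrices
  (output word, input word) to complex.\<close>

definition words :: "'b set \<Rightarrow> nat \<Rightarrow> 'b list set" where
  "words S N = {xs. length xs = N \<and> set xs \<subseteq> S}"

definition mmul :: "'b set \<Rightarrow> nat \<Rightarrow> ('b list \<Rightarrow> 'b list \<Rightarrow> complex)
    \<Rightarrow> ('b list \<Rightarrow> 'b list \<Rightarrow> complex) \<Rightarrow> ('b list \<Rightarrow> 'b list \<Rightarrow> complex)" where
  "mmul S N A B = (\<lambda>x z. \<Sum>y\<in>words S N. A x y * B y z)"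

definition ident :: "'b list \<Rightarrow> 'b list \<Rightarrow> complex" where
  "ident x y = (if x = y then 1 else 0)"

definition op_eq :: "'b set \<Rightarrow> nat \<Rightarrow> ('b list \<Rightarrow> 'b list \<Rightarrow> complex)
    \<Rightarrow> ('b list \<Rightarrow> 'b list \<Rightarrow> complex) \<Rightarrow> bool" where
  "op_eq S N A B = (\<forall>x\<in>words S N. \<forall>y\<in>words S N. A x y = B x y)"

text \<open>The operator 1^(i) \<otimes> R \<otimes> 1^(N-i-2) on E^(tensor N), R acting on tensor
  factors i, i+1 (0-based).\<close>
definition loc :: "nat \<Rightarrow> nat \<Rightarrow> ('b list \<Rightarrow> 'b list \<Rightarrow> complex)
    \<Rightarrow> ('b list \<Rightarrow> 'b list \<Rightarrow> complex)" where
  "loc N i R = (\<lambda>x y. R [x ! i, x ! (i+1)] [y ! i, y ! (i+1)] *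
      (if \<forall>k<N. k \<noteq> i \<and> k \<noteq> i + 1 \<longrightarrow> x ! k = y ! k then 1 else 0))"

definition is_R_matrix :: "'b set \<Rightarrow> ('b list \<Rightarrow> 'b list \<Rightarrow> complex) \<Rightarrow> bool" where
  "is_R_matrix S R \<longleftrightarrow>
     op_eq S 2 (mmul S 2 R R) ident \<and>
     op_eq S 3 (mmul S 3 (loc 3 0 R) (mmul S 3 (loc 3 1 R) (loc 3 0 R)))
               (mmul S 3 (loc 3 1 R) (mmul S 3 (loc 3 0 R) (loc 3 1 R)))"

text \<open>Yang-Baxter representation evaluated on the permutation
  sigma_(w!0) sigma_(w!1) ... (a word in the Coxeter generators; sigma_i swaps i and i+1),
  realised on E^(tensor N).\<close>
definition rho_word :: "'b set \<Rightarrow> nat \<Rightarrow> ('b list \<Rightarrow> 'b list \<Rightarrow> complex) \<Rightarrow> nat list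
    \<Rightarrow> ('b list \<Rightarrow> 'b list \<Rightarrow> complex)" where
  "rho_word S N R w = foldr (\<lambda>i A. mmul S N (loc N i R) A) w ident"

definition chi_word :: "'b set \<Rightarrow> nat \<Rightarrow> ('b list \<Rightarrow> 'b list \<Rightarrow> complex) \<Rightarrow> nat list \<Rightarrow> complex" where
  "chi_word S N R w = (\<Sum>x\<in>words S N. rho_word S N R w x x) / of_nat (card S ^ N)"

definition adjswap :: "nat \<Rightarrow> nat \<Rightarrow> nat" where
  "adjswap i = (\<lambda>k. if k = i then i + 1 else if k = i + 1 then i else k)"

definition perm_of_word :: "nat list \<Rightarrow> nat \<Rightarrow> nat" where
  "perm_of_word w = foldr (\<lambda>i f. adjswap i \<circ> f) w id"

definition thoma_params :: "(nat \<Rightarrow> real) \<Rightarrow> (nat \<Rightarrow> real) \<Rightarrow> bool" where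
  "thoma_params \<alpha> \<beta> \<longleftrightarrow> (\<forall>i. \<alpha> i \<ge> 0 \<and> \<beta> i \<ge> 0) \<and> antimono \<alpha> \<and> antimono \<beta> \<and>
     summable \<alpha> \<and> summable \<beta> \<and> (\<Sum>i. \<alpha> i) + (\<Sum>i. \<beta> i) \<le> 1"

definition thoma_p :: "(nat \<Rightarrow> real) \<Rightarrow> (nat \<Rightarrow> real) \<Rightarrow> nat \<Rightarrow> real" where
  "thoma_p \<alpha> \<beta> k = (\<Sum>i. \<alpha> i ^ k) + (-1) ^ (k - 1) * (\<Sum>i. \<beta> i ^ k)"

definition perm_orbit :: "(nat \<Rightarrow> nat) \<Rightarrow> nat \<Rightarrow> nat set" where
  "perm_orbit p x = {(p ^^ k) x | k. True}"

definition thoma_char :: "(nat \<Rightarrow> real) \<Rightarrow> (nat \<Rightarrow> real) \<Rightarrow> (nat \<Rightarrow> nat) \<Rightarrow> real" where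
  "thoma_char \<alpha> \<beta> p = (\<Prod>C\<in>perm_orbit p ` {x. p x \<noteq> x}. thoma_p \<alpha> \<beta> (card C))"

text \<open>The operator of the theorem on E\<otimes>E, E = V'\<otimes>W' with basis e_i\<otimes>f_j (i<n, j<m):
  R(e_a f_b \<otimes> e_c f_d) = (-1)^eps e_c f_b \<otimes> e_a f_d.\<close>
definition swapV_R :: "nat \<Rightarrow> (nat \<times> nat) list \<Rightarrow> (nat \<times> nat) list \<Rightarrow> complex" where
  "swapV_R \<epsilon> x y = (if length y = 2 \<and> x = [(fst (y!1), snd (y!0)), (fst (y!0), snd (y!1))]
                     then (-1) ^ \<epsilon> else 0)"

definition basisVW :: "nat \<Rightarrow> nat \<Rightarrow> (nat \<times> nat) set" where
  "basisVW n m = {..<n} \<times> {..<m}"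

end

theory Submission
  imports Defs "HOL-Combinatorics.Orbits"
begin

definition act :: "(nat \<Rightarrow> nat) \<Rightarrow> (nat \<times> nat) list \<Rightarrow> (nat \<times> nat) list" where
  "act p x = map (\<lambda>k. (fst (x ! p k), snd (x ! k))) [0..<length x]"

lemma length_act[simp]: "length (act p x) = length x"
  by (simp add: act_def)

lemma nth_act[simp]: "k < length x \<Longrightarrow> act p x ! k = (fst (x ! p k), snd (x ! k))"
  by (simp add: act_def)

lemma act_id: "act id x = x"
  by (rule nth_equalityI) auto

lemma act_comp:
  assumes "\<forall>k<length x. q k < length x"
  shows "act q (act r x) = act (r \<circ> q) x"
  using assms by (intro nth_equalityI) auto

lemma act_words:
  assumes "x \<in> words (basisVW n m) N" "\<forall>k<N. p k < N"
  shows "act p x \<in> words (basisVW n m) N"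
proof -
  have "\<forall>k<N. x ! k \<in> {..<n} \<times> {..<m}" using assms(1)
    by (auto simp: words_def basisVW_def)
  then show ?thesis using assms
    by (auto simp: words_def basisVW_def in_set_conv_nth mem_Times_iff)
qed

lemma adjswap_transpose: "adjswap i = transpose i (i+1)"
  by (auto simp: adjswap_def transpose_def fun_eq_iff)

lemma adjswap_bound: "i + 1 < N \<Longrightarrow> k < N \<Longrightarrow> adjswap i k < N"
  by (auto simp: adjswap_def)

lemma loc_eq:
  assumes x: "x \<in> words S N" and y: "y \<in> words S N" and i: "i + 1 < N"
  shows "loc N i (swapV_R \<epsilon>) x y = (-1) ^ \<epsilon> * (if y = act (adjswap i) x then 1 else 0)"
proof -
  have lx: "length x = N" and ly: "length y = N" using x y by (auto simp: words_def)
  have "([x ! i, x ! (i+1)] = [(fst (y!(i+1)), snd (y!i)), (fst (y!i), snd (y!(i+1)))] \<and>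
        (\<forall>k<N. k \<noteq> i \<and> k \<noteq> i + 1 \<longrightarrow> x ! k = y ! k)) \<longleftrightarrow> y = act (adjswap i) x"
  proof
    assume H: "[x ! i, x ! (i+1)] = [(fst (y!(i+1)), snd (y!i)), (fst (y!i), snd (y!(i+1)))] \<and>
        (\<forall>k<N. k \<noteq> i \<and> k \<noteq> i + 1 \<longrightarrow> x ! k = y ! k)"
    show "y = act (adjswap i) x"
    proof (rule nth_equalityI)
      fix k assume "k < length y"
      then show "y ! k = act (adjswap i) x ! k"
        using H lx ly i by (auto simp: adjswap_def prod_eq_iff)
    qed (simp add: lx ly)
  next
    assume H: "y = act (adjswap i) x"
    have "\<forall>k<N. y ! k = (fst (x ! adjswap i k), snd (x ! k))" using H lx by simp
    then show "[x ! i, x ! (i+1)] = [(fst (y!(i+1)), snd (y!i)), (fst (y!i), snd (y!(i+1)))] \<and>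
        (\<forall>k<N. k \<noteq> i \<and> k \<noteq> i + 1 \<longrightarrow> x ! k = y ! k)"
      using i by (auto simp: adjswap_def prod_eq_iff)
  qed
  then show ?thesis
    by (auto simp: loc_def swapV_R_def)
qed

lemma finite_words: "finite S \<Longrightarrow> finite (words S N)"
  unfolding words_def using finite_lists_length_eq[of S N] by (simp add: conj_commute)

lemma mmul_perm:
  assumes "\<forall>y\<in>words S N. A x y = a * (if y = f x then 1 else 0)" "f x \<in> words S N" "finite S"
  shows "mmul S N A B x z = a * B (f x) z"
proof -
  have "mmul S N A B x z = (\<Sum>y\<in>words S N. (if y = f x then a * B y z else 0))"
    unfolding mmul_def using assms(1) by (intro sum.cong) auto
  also have "\<dots> = a * B (f x) z"
    using assms(2) finite_words[OF assms(3)] by (simp add: sum.delta)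
  finally show ?thesis .
qed


lemma perm_bound: "\<forall>i\<in>set w. i + 1 < N \<Longrightarrow> k < N \<Longrightarrow> perm_of_word w k < N"
  by (induction w arbitrary: k) (auto simp: perm_of_word_def adjswap_bound)

lemma perm_of_word_Cons: "perm_of_word (i # w) = adjswap i \<circ> perm_of_word w"
  by (simp add: perm_of_word_def)

lemma rho_eq:
  assumes "\<forall>i\<in>set w. i + 1 < N" "x \<in> words (basisVW n m) N" "z \<in> words (basisVW n m) N"
  shows "rho_word (basisVW n m) N (swapV_R \<epsilon>) w x z =
     (-1) ^ (\<epsilon> * length w) * (if z = act (perm_of_word w) x then 1 else 0)"
  using assms
proof (induction w arbitrary: x)
  case Nil
  then show ?case by (auto simp: rho_word_def ident_def perm_of_word_def act_id[unfolded id_def])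
next
  case (Cons i w)
  have i: "i + 1 < N" using Cons.prems by auto
  have bd: "\<forall>k<N. adjswap i k < N" using i adjswap_bound by auto
  have ax: "act (adjswap i) x \<in> words (basisVW n m) N" using act_words[OF Cons.prems(2) bd] .
  have "rho_word (basisVW n m) N (swapV_R \<epsilon>) (i # w) x z =
        mmul (basisVW n m) N (loc N i (swapV_R \<epsilon>)) (rho_word (basisVW n m) N (swapV_R \<epsilon>) w) x z"
    by (simp add: rho_word_def)
  also have "\<dots> = (-1) ^ \<epsilon> * rho_word (basisVW n m) N (swapV_R \<epsilon>) w (act (adjswap i) x) z"
    apply (rule mmul_perm[where f="act (adjswap i)"])
    using loc_eq[OF Cons.prems(2) _ i] ax by (auto simp: basisVW_def)
  also have "\<dots> = (-1) ^ \<epsilon> * ((-1) ^ (\<epsilon> * length w) * (if z = act (perm_of_word w) (act (adjswap i) x) then 1 else 0))"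
    using Cons.IH[OF _ ax Cons.prems(3)] Cons.prems(1) by simp
  also have "act (perm_of_word w) (act (adjswap i) x) = act (perm_of_word (i # w)) x"
    using Cons.prems(1,2) perm_bound[of w N] by (subst act_comp) (auto simp: words_def perm_of_word_Cons)
  finally show ?case by (simp add: power_add)
qed

lemma loc_words:
  assumes "x \<in> words (basisVW n m) N" "i + 1 < N"
  shows "\<forall>y\<in>words (basisVW n m) N. loc N i (swapV_R \<epsilon>) x y = (-1) ^ \<epsilon> * (if y = act (adjswap i) x then 1 else 0)"
    "act (adjswap i) x \<in> words (basisVW n m) N"
  using loc_eq[OF assms(1) _ assms(2)] apply blast
  using act_words[OF assms(1)] adjswap_bound[OF assms(2)] by blast

lemma fin_basis: "finite (basisVW n m)" by (simp add: basisVW_def)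

lemma is_R: "is_R_matrix (basisVW n m) (swapV_R \<epsilon>)"
proof -
  let ?S = "basisVW n m" and ?R = "swapV_R \<epsilon>"
  have R1: "?R x y = loc 2 0 ?R x y" if "x \<in> words ?S 2" "y \<in> words ?S 2" for x y
  proof -
    have l2: "\<exists>a b. xs = [a, b]" if "length xs = 2" for xs :: "(nat \<times> nat) list"
      using that by (auto simp: length_Suc_conv numeral_2_eq_2)
    have lx: "length x = 2" "length y = 2" using that by (auto simp: words_def)
    obtain a b c d where "x = [a, b]" "y = [c, d]" using l2[OF lx(1)] l2[OF lx(2)] by blast
    then show ?thesis unfolding loc_def by (auto simp: less_2_cases_iff)
  qed
  have sq: "op_eq ?S 2 (mmul ?S 2 ?R ?R) ident"
    unfolding op_eq_def
  proof (intro ballI)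
    fix x z assume x: "x \<in> words ?S 2" and z: "z \<in> words ?S 2"
    have "mmul ?S 2 ?R ?R x z = mmul ?S 2 (loc 2 0 ?R) ?R x z"
      unfolding mmul_def using R1 x by (intro sum.cong) auto
    also have "\<dots> = (-1)^\<epsilon> * ?R (act (adjswap 0) x) z"
      by (rule mmul_perm[where f="act (adjswap 0)"]) (use loc_words[OF x] fin_basis in auto)
    also have "\<dots> = (-1)^\<epsilon> * ((-1)^\<epsilon> * (if z = act (adjswap 0) (act (adjswap 0) x) then 1 else 0))"
      using R1[OF loc_words(2)[OF x] z] loc_words(1)[OF loc_words(2)[OF x], of 0] z by auto
    also have "act (adjswap 0) (act (adjswap 0) x) = x"
    proof -
      have "adjswap 0 \<circ> adjswap 0 = id" by (auto simp: adjswap_def fun_eq_iff)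
      then show ?thesis using x by (subst act_comp) (auto simp: words_def adjswap_def act_id)
    qed
    finally show "mmul ?S 2 ?R ?R x z = ident x z"
      by (auto simp: ident_def power_add[symmetric] mult_2[symmetric] power_mult[symmetric])
  qed
  have br: "op_eq ?S 3 (mmul ?S 3 (loc 3 0 ?R) (mmul ?S 3 (loc 3 1 ?R) (loc 3 0 ?R)))
               (mmul ?S 3 (loc 3 1 ?R) (mmul ?S 3 (loc 3 0 ?R) (loc 3 1 ?R)))"
    unfolding op_eq_def
  proof (intro ballI)
    fix x z assume x: "x \<in> words ?S 3" and z: "z \<in> words ?S 3"
    have L: "mmul ?S 3 (loc 3 i ?R) (mmul ?S 3 (loc 3 j ?R) (loc 3 i ?R)) x z =
       (-1)^\<epsilon> * ((-1)^\<epsilon> * ((-1)^\<epsilon> * (if z = act (adjswap i) (act (adjswap j) (act (adjswap i) x)) then 1 else 0)))"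
      if ij: "i + 1 < 3" "j + 1 < 3" for i j
    proof -
      have x1: "act (adjswap i) x \<in> words ?S 3" using loc_words(2)[OF x ij(1)] .
      have x2: "act (adjswap j) (act (adjswap i) x) \<in> words ?S 3" using loc_words(2)[OF x1 ij(2)] .
      show ?thesis
        apply (subst mmul_perm[where f="act (adjswap i)"])
        using loc_words[OF x ij(1)] fin_basis apply auto[3]
        apply (subst mmul_perm[where f="act (adjswap j)"])
        using loc_words[OF x1 ij(2)] fin_basis apply auto[3]
        using loc_words(1)[OF x2 ij(1)] z by auto
    qed
    have bd: "\<forall>k<length x. adjswap i k < length x" if "i + 1 < 3" for i
      using x that by (auto simp: words_def adjswap_def)
    have e: "act (adjswap i) (act (adjswap j) (act (adjswap i) x)) = act (adjswap i \<circ> adjswap j \<circ> adjswap i) x"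
      if "i + 1 < 3" "j + 1 < 3" for i j
      using bd[OF that(1)] bd[OF that(2)] by (simp add: act_comp comp_assoc)
    have c: "adjswap 0 \<circ> adjswap 1 \<circ> adjswap 0 = adjswap 1 \<circ> adjswap 0 \<circ> adjswap 1"
      by (auto simp: adjswap_def fun_eq_iff)
    show "mmul ?S 3 (loc 3 0 ?R) (mmul ?S 3 (loc 3 1 ?R) (loc 3 0 ?R)) x z =
          mmul ?S 3 (loc 3 1 ?R) (mmul ?S 3 (loc 3 0 ?R) (loc 3 1 ?R)) x z"
      using L[of 0 1] L[of 1 0] e[of 0 1] e[of 1 0] c by simp
  qed
  show ?thesis unfolding is_R_matrix_def using sq br by blast
qed

lemma orb_self: "permutation p \<Longrightarrow> z \<in> orbit p z"
  by (rule permutation_self_in_orbit)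

lemma orb_eq: assumes "permutation p" "z \<in> orbit p w" shows "orbit p z = orbit p w"
proof
  show "orbit p z \<subseteq> orbit p w" using assms(2) orbit_trans by fast
  have "w \<in> orbit p z" using orbit_swap[OF orb_self[OF assms(1)] assms(2)] .
  then show "orbit p w \<subseteq> orbit p z" using orbit_trans by fast
qed

lemma orb_bound: assumes "p permutes {..<N}" "z < N" shows "orbit p z \<subseteq> {..<N}"
proof
  fix w assume "w \<in> orbit p z" then show "w \<in> {..<N}"
    by induction (use assms permutes_in_image[OF assms(1)] in auto)
qed

locale step_setup =
  fixes p q :: "nat \<Rightarrow> nat" and N x y u :: nat
  assumes pp: "p permutes {..<N}" and qp: "q permutes {..<N}"
    and xN: "x < N" and yx: "y = p x" "y \<noteq> x" and pu: "p u = x" and uN: "u < N"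
    and qx: "q x = x" and qu: "q u = y" and qo: "\<And>z. z \<noteq> x \<Longrightarrow> z \<noteq> u \<Longrightarrow> q z = p z"
begin

lemma permp: "permutation p" using permutes_imp_permutation[OF _ pp] by simp
lemma permq: "permutation q" using permutes_imp_permutation[OF _ qp] by simp

lemma injp: "p a = p b \<Longrightarrow> a = b"
  using permutes_inj[OF pp] by (auto dest: injD)

abbreviation "C \<equiv> orbit p x"

lemma uxne: "u \<noteq> x" using pu yx by auto

lemma xC: "x \<in> C" using orb_self[OF permp] .
lemma yC: "y \<in> C" using yx orbit.base by metis
lemma uC: "u \<in> C"
proof -
  have "x \<in> orbit p u" using pu orbit.base by metis
  then have "orbit p x = orbit p u" using orb_eq[OF permp] by blast
  then show ?thesis using orb_self[OF permp, of u] by simp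
qed

lemma q_closed: "w \<in> C - {x} \<Longrightarrow> q w \<in> C - {x}"
proof -
  assume w: "w \<in> C - {x}"
  show "q w \<in> C - {x}"
  proof (cases "w = u")
    case True then show ?thesis using qu yC yx by auto
  next
    case False
    then have "q w = p w" using w qo by auto
    moreover have "p w \<noteq> x" using False pu injp by metis
    moreover have "p w \<in> C" using w orbit.step by fast
    ultimately show ?thesis by auto
  qed
qed

lemma orbq_sub: assumes "z \<in> C - {x}" shows "orbit q z \<subseteq> C - {x}"
proof
  fix w assume "w \<in> orbit q z" then show "w \<in> C - {x}"
    by induction (use assms q_closed in auto)
qed

lemma orbq_in: assumes z: "z \<in> C - {x}" shows "C - {x} \<subseteq> orbit q z"
proof -
  have key: "w \<in> orbit q z \<or> (w = x \<and> u \<in> orbit q z)" if "w \<in> orbit p z" for w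
    using that
  proof induction
    case base
    show ?case
    proof (cases "z = u")
      case True then show ?thesis using pu orb_self[OF permq] by auto
    next
      case False then show ?thesis using qo[of z] z orbit.base[of q z] by auto
    qed
  next
    case (step w)
    show ?case
    proof (cases "w = x")
      case True
      then have "u \<in> orbit q z" using step.IH orbq_sub[OF z] by auto
      then have "q u \<in> orbit q z" by (rule orbit.step)
      then show ?thesis using True qu yx by auto
    next
      case False
      then have wq: "w \<in> orbit q z" using step.IH by auto
      show ?thesis
      proof (cases "w = u")
        case True then show ?thesis using wq pu by auto
      next
        case False
        then show ?thesis using qo[of w] \<open>w \<noteq> x\<close> orbit.step[OF wq] by auto
      qed
    qed
  qed
  have "orbit p z = C" using orb_eq[OF permp] z by auto
  then show ?thesis using key by auto
qed

lemma orbq_C: "z \<in> C - {x} \<Longrightarrow> orbit q z = C - {x}"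
  using orbq_sub orbq_in by blast

lemma orbq_out: assumes "z \<notin> C" shows "orbit q z = orbit p z"
proof (rule orbit_cong[OF orb_self[OF permp]])
  fix s assume s: "s \<in> orbit p z"
  have "s \<noteq> x"
  proof
    assume "s = x"
    then have "orbit p x = orbit p z" using orb_eq[OF permp] s by simp
    then show False using assms orb_self[OF permp, of z] by simp
  qed
  moreover have "s \<noteq> u"
  proof
    assume "s = u"
    then have "orbit p u = orbit p z" using orb_eq[OF permp] s by simp
    moreover have "orbit p u = C" using orb_eq[OF permp uC] .
    ultimately show False using assms orb_self[OF permp, of z] by simp
  qed
  ultimately show "q s = p s" using qo by simp
qed

lemma orbq_x: "orbit q x = {x}" using qx orbit_eq_singleton_iff by metis

lemma CN: "C \<subseteq> {..<N}" using orb_bound[OF pp xN] .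

lemma finC: "finite C" using CN finite_subset by blast

lemma cardC: "card C \<ge> 2"
proof -
  have "{x, y} \<subseteq> C" using xC yC by auto
  then have "card {x, y} \<le> card C" using finC card_mono by blast
  then show ?thesis using yx by auto
qed

abbreviation "Rest \<equiv> orbit p ` ({..<N} - C)"

lemma orbC: "z \<in> C \<Longrightarrow> orbit p z = C"
  by (rule orb_eq[OF permp])

lemma imgp: "orbit p ` {..<N} = insert C Rest"
proof -
  have dec: "C \<union> ({..<N} - C) = {..<N}" using CN by auto
  have e1: "orbit p ` C = {C}"
  proof
    show "orbit p ` C \<subseteq> {C}" using orbC by blast
    show "{C} \<subseteq> orbit p ` C" using orbC[OF xC] xC by blast
  qed
  have "orbit p ` {..<N} = orbit p ` (C \<union> ({..<N} - C))" by (simp only: dec)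
  also have "\<dots> = orbit p ` C \<union> Rest" by (simp only: image_Un)
  also have "\<dots> = {C} \<union> Rest" by (simp only: e1)
  finally show ?thesis by simp
qed

lemma imgq: "orbit q ` {..<N} = insert {x} (insert (C - {x}) Rest)"
proof -
  have dec: "{x} \<union> (C - {x}) \<union> ({..<N} - C) = {..<N}" using CN xC by auto
  have e1: "orbit q ` (C - {x}) = {C - {x}}" using orbq_C yC yx by auto
  have e2: "orbit q ` ({..<N} - C) = Rest" using orbq_out by auto
  have "orbit q ` {..<N} = orbit q ` ({x} \<union> (C - {x}) \<union> ({..<N} - C))" by (simp only: dec)
  also have "\<dots> = orbit q ` {x} \<union> orbit q ` (C - {x}) \<union> orbit q ` ({..<N} - C)" by (simp only: image_Un)
  also have "\<dots> = {{x}} \<union> {C - {x}} \<union> Rest" by (simp only: e1 e2 orbq_x image_insert image_empty)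
  finally show ?thesis by (simp add: insert_commute)
qed

lemma notRest: "C \<notin> Rest" "{x} \<notin> Rest" "C - {x} \<notin> Rest"
proof -
  have *: "D \<notin> Rest" if "z \<in> D" "D \<subseteq> C" for z D
  proof
    assume "D \<in> Rest"
    then obtain w where w: "w \<in> {..<N} - C" "D = orbit p w" by blast
    have "orbit p z = orbit p w" using orb_eq[OF permp] that(1) w(2) by simp
    moreover have "orbit p z = C" using orbC that by blast
    ultimately show False using w orb_self[OF permp, of w] by auto
  qed
  show "C \<notin> Rest" using *[OF xC] by simp
  show "{x} \<notin> Rest" using *[of x "{x}"] xC by simp
  show "C - {x} \<notin> Rest" using *[of y "C - {x}"] yC yx by auto
qed

lemma prod_step:
  fixes r :: real
  shows "(\<Prod>D\<in>orbit p ` {..<N}. r ^ (card D - 1)) = r * (\<Prod>D\<in>orbit q ` {..<N}. r ^ (card D - 1))"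
proof -
  have fR: "finite Rest" by simp
  have ne: "{x} \<noteq> C - {x}" by auto
  have cc: "card (C - {x}) = card C - 1" using finC xC by simp
  have "(\<Prod>D\<in>orbit p ` {..<N}. r ^ (card D - 1)) = r ^ (card C - 1) * (\<Prod>D\<in>Rest. r ^ (card D - 1))"
    unfolding imgp using fR notRest by simp
  moreover have "(\<Prod>D\<in>orbit q ` {..<N}. r ^ (card D - 1)) = r ^ (card (C - {x}) - 1) * (\<Prod>D\<in>Rest. r ^ (card D - 1))"
    unfolding imgq using fR notRest ne by simp
  moreover have "r ^ (card C - 1) = r * r ^ (card (C - {x}) - 1)"
    using cc cardC by (simp add: power_Suc[symmetric] Suc_diff_Suc)
  ultimately show ?thesis by simp
qed

end

definition fixset :: "nat \<Rightarrow> nat \<Rightarrow> nat \<Rightarrow> (nat \<Rightarrow> nat) \<Rightarrow> (nat \<times> nat) list set" where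
  "fixset n m N p = {c \<in> words (basisVW n m) N. \<forall>k<N. fst (c ! p k) = fst (c ! k)}"

context step_setup
begin

lemma injq: "q a = q b \<Longrightarrow> a = b"
  using permutes_inj[OF qp] by (auto dest: injD)

lemma eqv: "c \<in> fixset n m N p \<longleftrightarrow> c \<in> fixset n m N q \<and> fst (c ! x) = fst (c ! y)"
proof
  assume H: "c \<in> fixset n m N p"
  then have P: "\<And>k. k < N \<Longrightarrow> fst (c ! p k) = fst (c ! k)" and w: "c \<in> words (basisVW n m) N"
    by (auto simp: fixset_def)
  have xy: "fst (c ! x) = fst (c ! y)" using P[OF xN] yx by simp
  have "fst (c ! q k) = fst (c ! k)" if "k < N" for k
  proof -
    consider "k = x" | "k = u" | "k \<noteq> x" "k \<noteq> u" by blast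
    then show ?thesis
    proof cases
      case 1 then show ?thesis using qx by simp
    next
      case 2 then show ?thesis using qu xy P[OF uN] pu by simp
    next
      case 3 then show ?thesis using qo P that by simp
    qed
  qed
  then show "c \<in> fixset n m N q \<and> fst (c ! x) = fst (c ! y)" using w xy by (auto simp: fixset_def)
next
  assume H: "c \<in> fixset n m N q \<and> fst (c ! x) = fst (c ! y)"
  then have Q: "\<And>k. k < N \<Longrightarrow> fst (c ! q k) = fst (c ! k)" and w: "c \<in> words (basisVW n m) N"
    and xy: "fst (c ! x) = fst (c ! y)"
    by (auto simp: fixset_def)
  have "fst (c ! p k) = fst (c ! k)" if "k < N" for k
  proof -
    consider "k = x" | "k = u" | "k \<noteq> x" "k \<noteq> u" by blast
    then show ?thesis
    proof cases
      case 1 then show ?thesis using xy yx by simp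
    next
      case 2 then show ?thesis using qu xy Q[OF uN] pu by simp
    next
      case 3 then show ?thesis using qo[OF 3] Q[OF that] by simp
    qed
  qed
  then show "c \<in> fixset n m N p" using w by (auto simp: fixset_def)
qed

lemma upd_q:
  assumes "c \<in> fixset n m N q" "v \<in> basisVW n m"
  shows "c[x := v] \<in> fixset n m N q"
proof -
  have w: "c \<in> words (basisVW n m) N" and Q: "\<And>k. k < N \<Longrightarrow> fst (c ! q k) = fst (c ! k)"
    using assms(1) by (auto simp: fixset_def)
  have l: "length c = N" using w by (simp add: words_def)
  have "set (c[x := v]) \<subseteq> basisVW n m"
    using w assms(2) set_update_subset_insert[of c x v] by (auto simp: words_def)
  then have w': "c[x := v] \<in> words (basisVW n m) N" using l by (simp add: words_def)
  have qN: "q k < N" if "k < N" for k using permutes_in_image[OF qp] that by simp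
  have "fst (c[x := v] ! q k) = fst (c[x := v] ! k)" if "k < N" for k
  proof (cases "k = x")
    case True then show ?thesis using qx by simp
  next
    case False
    then have "q k \<noteq> x" using injq qx by metis
    then show ?thesis using False Q[OF that] l qN[OF that] that by simp
  qed
  then show ?thesis using w' by (simp add: fixset_def)
qed

lemma count_step: "card (fixset n m N q) = n * card (fixset n m N p)"
proof -
  let ?F = "fixset n m N p" and ?G = "fixset n m N q"
  define h where "h = (\<lambda>(c :: (nat \<times> nat) list, a :: nat). c[x := (a, snd (c ! x))])"
  have wl: "length c = N" if "c \<in> fixset n m N r" for c r
    using that by (simp add: fixset_def words_def)
  have inb: "c ! k \<in> basisVW n m" if "c \<in> fixset n m N r" "k < N" for c r k
    using that by (auto simp: fixset_def words_def)
  have img: "?G = h ` (?F \<times> {..<n})"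
  proof
    show "h ` (?F \<times> {..<n}) \<subseteq> ?G"
    proof
      fix z assume "z \<in> h ` (?F \<times> {..<n})"
      then obtain c a where c: "c \<in> ?F" and a: "a \<in> {..<n}" and z: "z = h (c, a)" by blast
      have "c \<in> ?G" using c eqv by blast
      moreover have "(a, snd (c ! x)) \<in> basisVW n m" using a inb[OF c xN] by (auto simp: basisVW_def)
      ultimately show "z \<in> ?G" unfolding z h_def using upd_q by simp
    qed
  next
    show "?G \<subseteq> h ` (?F \<times> {..<n})"
    proof
      fix c assume c: "c \<in> ?G"
      define c0 where "c0 = c[x := (fst (c ! y), snd (c ! x))]"
      have l: "length c = N" using wl[OF c] .
      have yN: "y < N" using permutes_in_image[OF pp] xN yx by simp
      have "(fst (c ! y), snd (c ! x)) \<in> basisVW n m"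
        using inb[OF c yN] inb[OF c xN] by (auto simp: basisVW_def)
      then have c0G: "c0 \<in> ?G" unfolding c0_def using upd_q[OF c] by simp
      have "fst (c0 ! x) = fst (c0 ! y)" unfolding c0_def using l xN yN yx by simp
      then have c0F: "c0 \<in> ?F" using eqv c0G by blast
      have an: "fst (c ! x) \<in> {..<n}" using inb[OF c xN] by (auto simp: basisVW_def)
      have "h (c0, fst (c ! x)) = c" unfolding h_def c0_def using l xN by simp
      then show "c \<in> h ` (?F \<times> {..<n})" using c0F an by force
    qed
  qed
  have inj: "inj_on h (?F \<times> {..<n})"
  proof (rule inj_onI, clarify)
    fix c a c' a' assume c: "c \<in> ?F" and c': "c' \<in> ?F" and e: "h (c, a) = h (c', a')"
    have l: "length c = N" "length c' = N" using wl c c' by auto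
    have yN: "y < N" using permutes_in_image[OF pp] xN yx by simp
    have e': "c[x := (a, snd (c ! x))] = c'[x := (a', snd (c' ! x))]" using e by (simp add: h_def)
    have ex: "(a, snd (c ! x)) = (a', snd (c' ! x))"
      using arg_cong[OF e', of "\<lambda>l. l ! x"] l xN by simp
    have eo: "c ! k = c' ! k" if "k < N" "k \<noteq> x" for k
      using arg_cong[OF e', of "\<lambda>l. l ! k"] that by simp
    have "fst (c ! x) = fst (c' ! x)"
      using eqv c c' eo[OF yN] yx by (metis)
    then have "c ! x = c' ! x" using ex by (simp add: prod_eq_iff)
    then have "c = c'" using eo l by (metis nth_equalityI)
    then show "c = c' \<and> a = a'" using ex by simp
  qed
  have "card ?G = card (?F \<times> {..<n})" unfolding img using card_image[OF inj] .
  also have "\<dots> = n * card ?F" by (simp add: card_cartesian_product)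
  finally show ?thesis .
qed

end

lemma card_words: "card (words (basisVW n m) N) = (n * m) ^ N"
proof -
  have "words (basisVW n m) N = {xs. set xs \<subseteq> basisVW n m \<and> length xs = N}"
    by (auto simp: words_def)
  then show ?thesis using card_lists_length_eq[of "basisVW n m" N]
    by (simp add: basisVW_def card_cartesian_product)
qed

lemma alg: fixes F s K nn :: real assumes "nn \<noteq> 0"
  shows "F * s^e / K = ((-1)^e / nn) * ((nn * F) * ((-1)^e * s^e) / K)"
proof -
  have e2: "((-1::real) ^ e) * (-1) ^ e = 1" by (simp add: power_mult_distrib[symmetric])
  have "((-1)^e / nn) * ((nn * F) * ((-1)^e * s^e) / K) = ((-1)^e * (-1)^e) * (nn / nn) * (F * s^e / K)"
    by (simp add: divide_inverse ac_simps)
  also have "\<dots> = F * s^e / K" using assms e2 by simp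
  finally show ?thesis by (rule sym)
qed

lemma main_count:
  fixes \<epsilon> :: nat
  assumes n: "n \<ge> 1" and m: "m \<ge> 1" and pp: "p permutes {..<N}"
  shows "real (card (fixset n m N p)) * (of_int (sign p)) ^ \<epsilon> / (real n * real m) ^ N =
         (\<Prod>D\<in>orbit p ` {..<N}. ((-1) ^ \<epsilon> / real n) ^ (card D - 1))"
  using pp
proof (induction "card {z. p z \<noteq> z}" arbitrary: p rule: less_induct)
  case less
  have pp: "p permutes {..<N}" by (rule less.prems)
  show ?case
  proof (cases "\<exists>x. p x \<noteq> x")
    case False
    then have pid: "p = id" by (auto simp: fun_eq_iff)
    have "fixset n m N p = words (basisVW n m) N" by (auto simp: fixset_def pid)
    then have l: "real (card (fixset n m N p)) = (real n * real m) ^ N"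
      by (simp add: card_words)
    have "\<forall>D\<in>orbit p ` {..<N}. ((-1) ^ \<epsilon> / real n) ^ (card D - 1) = 1"
    proof
      fix D assume "D \<in> orbit p ` {..<N}"
      then obtain z where "D = orbit p z" by blast
      then have "D = {z}" using orbit_eq_singleton_iff[of p z] pid by simp
      then show "((-1) ^ \<epsilon> / real n) ^ (card D - 1) = 1" by simp
    qed
    then have r: "(\<Prod>D\<in>orbit p ` {..<N}. ((-1) ^ \<epsilon> / real n) ^ (card D - 1)) = 1"
      by (rule prod.neutral)
    show ?thesis unfolding l r using n m by (simp add: pid)
  next
    case True
    then obtain x where px: "p x \<noteq> x" by blast
    have xN: "x < N" using px permutes_not_in[OF pp] by blast
    define y where "y = p x"
    define u where "u = inv p x"
    have yN: "y < N" using permutes_in_image[OF pp] xN y_def by simp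
    have pu: "p u = x" unfolding u_def using permutes_inverses(1)[OF pp] by simp
    have uN: "u < N"
    proof (rule ccontr)
      assume "\<not> u < N"
      then have "p u = u" using permutes_not_in[OF pp] by simp
      then show False using pu px by simp
    qed
    have injp: "p a = p b \<Longrightarrow> a = b" for a b
      using permutes_inj[OF pp] by (auto dest: injD)
    define q where "q = transpose x y \<circ> p"
    have qp: "q permutes {..<N}" unfolding q_def
      by (rule permutes_compose[OF pp permutes_swap_id]) (use xN yN in auto)
    have qx: "q x = x" by (simp add: q_def y_def)
    have qu: "q u = y" by (simp add: q_def pu)
    have qo: "q z = p z" if "z \<noteq> x" "z \<noteq> u" for z
    proof -
      have "p z \<noteq> y" using that injp y_def by metis
      moreover have "p z \<noteq> x" using that injp pu by metis
      ultimately show ?thesis by (simp add: q_def)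
    qed
    interpret S: step_setup p q N x y u
      by unfold_locales (use pp qp xN y_def px pu uN qx qu qo in auto)
    have sub: "{z. q z \<noteq> z} \<subseteq> {z. p z \<noteq> z} - {x}"
    proof
      fix z assume z: "z \<in> {z. q z \<noteq> z}"
      have "z \<noteq> x" using z qx by auto
      moreover have "p z \<noteq> z"
      proof
        assume pz: "p z = z"
        have "z \<noteq> u"
        proof
          assume "z = u"
          then have "x = z" using pu pz by simp
          then show False using px pz by simp
        qed
        then show False using qo[OF \<open>z \<noteq> x\<close>] pz z by simp
      qed
      ultimately show "z \<in> {z. p z \<noteq> z} - {x}" by simp
    qed
    have fin: "finite {z. p z \<noteq> z}"
    proof -
      have "{z. p z \<noteq> z} \<subseteq> {..<N}" using permutes_not_in[OF pp] by blast
      then show ?thesis using finite_subset by blast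
    qed
    have lt: "card {z. q z \<noteq> z} < card {z. p z \<noteq> z}"
    proof -
      have "card {z. q z \<noteq> z} \<le> card ({z. p z \<noteq> z} - {x})"
        using sub fin by (simp add: card_mono)
      also have "\<dots> < card {z. p z \<noteq> z}" using card_Diff1_less[OF fin, of x] px by simp
      finally show ?thesis .
    qed
    have IH: "real (card (fixset n m N q)) * (of_int (sign q)) ^ \<epsilon> / (real n * real m) ^ N =
         (\<Prod>D\<in>orbit q ` {..<N}. ((-1) ^ \<epsilon> / real n) ^ (card D - 1))"
      using less.hyps[OF lt qp] .
    have sq: "sign q = - sign p"
      unfolding q_def using sign_compose[OF permutation_swap_id S.permp, of x y] sign_swap_id[of x y] px y_def
      by simp
    have cq: "card (fixset n m N q) = n * card (fixset n m N p)" by (rule S.count_step)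
    have ps: "(\<Prod>D\<in>orbit p ` {..<N}. ((-1) ^ \<epsilon> / real n) ^ (card D - 1)) =
       ((-1) ^ \<epsilon> / real n) * (\<Prod>D\<in>orbit q ` {..<N}. ((-1) ^ \<epsilon> / real n) ^ (card D - 1))"
      by (rule S.prod_step)
    have pm: "(of_int (- sign p) :: real) ^ \<epsilon> = (-1) ^ \<epsilon> * (of_int (sign p)) ^ \<epsilon>"
      unfolding of_int_minus by (rule power_minus)
    show ?thesis unfolding ps IH[symmetric] cq sq pm of_nat_mult
      by (rule alg) (use n in simp)
  qed
qed

lemma pw_permutes: "\<forall>i\<in>set w. i + 1 < N \<Longrightarrow> perm_of_word w permutes {..<N}"
proof (induction w)
  case Nil then show ?case using permutes_id by (simp add: perm_of_word_def id_def)
next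
  case (Cons i w)
  then show ?case unfolding perm_of_word_Cons adjswap_transpose
    by (intro permutes_compose permutes_swap_id) auto
qed

lemma pw_perm: "\<forall>i\<in>set w. i + 1 < N \<Longrightarrow> permutation (perm_of_word w)"
  using permutes_imp_permutation[OF _ pw_permutes] by blast

lemma pw_sign: "\<forall>i\<in>set w. i + 1 < N \<Longrightarrow> sign (perm_of_word w) = (-1) ^ length w"
proof (induction w)
  case Nil then show ?case by (simp add: perm_of_word_def)
next
  case (Cons i w)
  have "sign (perm_of_word (i # w)) = sign (transpose i (i+1)) * sign (perm_of_word w)"
    unfolding perm_of_word_Cons adjswap_transpose
    using sign_compose[OF permutation_swap_id pw_perm, of w N i "i+1"] Cons.prems by simp
  then show ?case using Cons by (simp add: sign_swap_id)
qed

lemma act_fix: "length x = N \<Longrightarrow> (x = act p x \<longleftrightarrow> (\<forall>k<N. fst (x ! p k) = fst (x ! k)))"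
  by (auto simp: list_eq_iff_nth_eq prod_eq_iff)

lemma suminf_if:
  fixes a :: real
  assumes "k \<ge> 1"
  shows "(\<Sum>i. (if c \<and> i < n then a else 0) ^ k) = (if c then real n * a ^ k else 0)"
proof -
  have "(\<Sum>i. (if c \<and> i < n then a else 0) ^ k) = (\<Sum>i<n. (if c \<and> i < n then a else 0) ^ k)"
    by (rule suminf_finite) (use assms in auto)
  then show ?thesis using assms by simp
qed

lemma thoma_p_eq:
  assumes "\<epsilon> \<in> {0, 1}" "k \<ge> 1" "n \<ge> 1"
  shows "thoma_p (\<lambda>i. if \<epsilon> = 0 \<and> i < n then 1 / real n else 0)
                 (\<lambda>i. if \<epsilon> = 1 \<and> i < n then 1 / real n else 0) k = ((-1) ^ \<epsilon> / real n) ^ (k - 1)"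
proof -
  obtain j where kj: "k = Suc j" using assms(2) by (cases k) auto
  have n0: "real n \<noteq> 0" using assms(3) by simp
  have nk: "real n * (1 / real n) ^ k = (1 / real n) ^ (k - 1)"
  proof -
    have "real n * (1 / real n) ^ k = (real n * (1 / real n)) * (1 / real n) ^ j"
      unfolding kj by (simp only: power_Suc mult.assoc)
    also have "real n * (1 / real n) = 1" using n0 by simp
    finally show ?thesis using kj by simp
  qed
  have s1: "(\<Sum>i. (if c \<and> i < n then 1 / real n else 0) ^ k) = (if c then (1 / real n) ^ (k - 1) else 0)" for c
    using suminf_if[OF assms(2), of c n "1 / real n"] nk by simp
  show ?thesis
    using assms(1)
  proof
    assume e: "\<epsilon> = 0" show ?thesis
      unfolding thoma_p_def e using s1[of True] s1[of False] by simp
  next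
    assume "\<epsilon> \<in> {1}"
    then have e: "\<epsilon> = 1" by simp
    have "(-1 / real n) ^ (k - 1) = (-1) ^ (k - 1) * (1 / real n) ^ (k - 1)"
      by (simp add: power_mult_distrib[symmetric])
    then show ?thesis
      unfolding thoma_p_def e using s1[of True] s1[of False] by simp
  qed
qed

lemma thoma_params_ok:
  fixes \<epsilon> :: nat
  assumes "\<epsilon> \<in> {0, 1}" "n \<ge> 1"
  shows "thoma_params (\<lambda>i. if \<epsilon> = 0 \<and> i < n then 1 / real n else 0)
                 (\<lambda>i. if \<epsilon> = 1 \<and> i < n then 1 / real n else 0)"
proof -
  let ?a = "\<lambda>i. if \<epsilon> = 0 \<and> i < n then 1 / real n else 0"
  let ?b = "\<lambda>i. if \<epsilon> = 1 \<and> i < n then 1 / real n else 0"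
  have am: "antimono (\<lambda>i. if c \<and> i < n then 1 / real n else (0::real))" for c
    unfolding antimono_def by auto
  have sm: "summable (\<lambda>i. if c \<and> i < n then 1 / real n else (0::real))" for c
    by (rule summable_finite[of "{..<n}"]) auto
  have n0: "real n \<noteq> 0" using assms(2) by simp
  have s1: "(\<Sum>i. ?a i) = (if \<epsilon> = 0 then 1 else 0)"
    using suminf_if[of 1 "\<epsilon> = 0" n "1 / real n"] n0 by simp
  have s2: "(\<Sum>i. ?b i) = (if \<epsilon> = 1 then 1 else 0)"
    using suminf_if[of 1 "\<epsilon> = 1" n "1 / real n"] n0 by simp
  have nn: "\<forall>i. ?a i \<ge> 0 \<and> ?b i \<ge> 0" by simp
  have le: "(if \<epsilon> = 0 then 1 else 0) + (if \<epsilon> = 1 then 1 else 0) \<le> (1::real)"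
    using assms(1) by (cases "\<epsilon> = 0") simp_all
  show ?thesis unfolding thoma_params_def s1 s2
    by (intro conjI nn am sm le)
qed

lemma thoma_char_eq:
  fixes \<epsilon> :: nat
  assumes "\<epsilon> \<in> {0, 1}" "n \<ge> 1" "P permutes {..<N}"
  shows "thoma_char (\<lambda>i. if \<epsilon> = 0 \<and> i < n then 1 / real n else 0)
                 (\<lambda>i. if \<epsilon> = 1 \<and> i < n then 1 / real n else 0) P =
         (\<Prod>D\<in>orbit P ` {..<N}. ((-1) ^ \<epsilon> / real n) ^ (card D - 1))"
proof -
  let ?a = "\<lambda>i. if \<epsilon> = 0 \<and> i < n then 1 / real n else 0"
  let ?b = "\<lambda>i. if \<epsilon> = 1 \<and> i < n then 1 / real n else 0"
  let ?g = "\<lambda>D. ((-1) ^ \<epsilon> / real n) ^ (card D - 1)"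
  have pP: "permutation P" using permutes_imp_permutation[OF _ assms(3)] by simp
  have po: "perm_orbit P = orbit P"
    by (rule ext) (simp add: perm_orbit_def orbit_altdef_permutation[OF pP])
  have cD: "card (orbit P z) \<ge> 1" for z
  proof -
    have "z \<in> orbit P z" using orb_self[OF pP] .
    moreover have "finite (orbit P z)" using finite_orbit[OF orb_self[OF pP]] .
    ultimately show ?thesis using card_0_eq[of "orbit P z"] by fastforce
  qed
  have "thoma_char ?a ?b P = (\<Prod>C\<in>orbit P ` {x. P x \<noteq> x}. thoma_p ?a ?b (card C))"
    unfolding thoma_char_def po ..
  also have "\<dots> = (\<Prod>C\<in>orbit P ` {x. P x \<noteq> x}. ?g C)"
  proof (rule prod.cong[OF refl])
    fix C assume "C \<in> orbit P ` {x. P x \<noteq> x}"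
    then obtain z where "C = orbit P z" by blast
    then show "thoma_p ?a ?b (card C) = ?g C" using thoma_p_eq[OF assms(1) cD[of z] assms(2)] by simp
  qed
  also have "\<dots> = (\<Prod>D\<in>orbit P ` {..<N}. ?g D)"
  proof (rule prod.mono_neutral_left)
    show "finite (orbit P ` {..<N})" by simp
    show "orbit P ` {x. P x \<noteq> x} \<subseteq> orbit P ` {..<N}"
      using permutes_not_in[OF assms(3)] by blast
    show "\<forall>i\<in>orbit P ` {..<N} - orbit P ` {x. P x \<noteq> x}. ?g i = 1"
    proof
      fix D assume D: "D \<in> orbit P ` {..<N} - orbit P ` {x. P x \<noteq> x}"
      then obtain z where z: "D = orbit P z" "P z = z" by blast
      then have "D = {z}" using orbit_eq_singleton_iff by metis
      then show "?g D = 1" by simp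
    qed
  qed
  finally show ?thesis .
qed

lemma chi_eq:
  fixes \<epsilon> :: nat
  assumes n: "n \<ge> 1" and m: "m \<ge> 1" and wb: "\<forall>i\<in>set w. i + 1 < N"
  shows "chi_word (basisVW n m) N (swapV_R \<epsilon>) w =
     complex_of_real (\<Prod>D\<in>orbit (perm_of_word w) ` {..<N}. ((-1) ^ \<epsilon> / real n) ^ (card D - 1))"
proof -
  let ?P = "perm_of_word w" and ?S = "basisVW n m"
  let ?F = "fixset n m N ?P"
  have fw: "finite (words ?S N)" using finite_words fin_basis by blast
  have "(\<Sum>x\<in>words ?S N. rho_word ?S N (swapV_R \<epsilon>) w x x) =
        (\<Sum>x\<in>words ?S N. (-1) ^ (\<epsilon> * length w) * of_bool (x = act ?P x))"
    using rho_eq[OF wb] by (intro sum.cong) auto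
  also have "\<dots> = (-1) ^ (\<epsilon> * length w) * of_nat (card (words ?S N \<inter> {x. x = act ?P x}))"
    by (simp add: sum_distrib_left[symmetric] fw)
  also have "words ?S N \<inter> {x. x = act ?P x} = ?F"
    using act_fix by (auto simp: fixset_def words_def)
  finally have sm: "(\<Sum>x\<in>words ?S N. rho_word ?S N (swapV_R \<epsilon>) w x x) = (-1) ^ (\<epsilon> * length w) * of_nat (card ?F)" .
  have cs: "card ?S = n * m" by (simp add: basisVW_def card_cartesian_product)
  have mc: "real (card ?F) * (of_int (sign ?P)) ^ \<epsilon> / (real n * real m) ^ N =
         (\<Prod>D\<in>orbit ?P ` {..<N}. ((-1) ^ \<epsilon> / real n) ^ (card D - 1))"
    by (rule main_count[OF n m pw_permutes[OF wb]])
  have sg: "(of_int (sign ?P) :: real) ^ \<epsilon> = (-1) ^ (\<epsilon> * length w)"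
  proof -
    have "(of_int (sign ?P) :: real) ^ \<epsilon> = ((-1) ^ length w) ^ \<epsilon>" using pw_sign[OF wb] by simp
    also have "\<dots> = (-1) ^ (length w * \<epsilon>)" by (rule power_mult[symmetric])
    finally show ?thesis by (simp add: mult.commute)
  qed
  have "chi_word ?S N (swapV_R \<epsilon>) w = (-1) ^ (\<epsilon> * length w) * of_nat (card ?F) / of_nat ((n * m) ^ N)"
    unfolding chi_word_def sm cs ..
  also have "\<dots> = complex_of_real (real (card ?F) * (-1) ^ (\<epsilon> * length w) / (real n * real m) ^ N)"
    by (simp add: power_mult_distrib)
  finally have c: "chi_word ?S N (swapV_R \<epsilon>) w = complex_of_real (real (card ?F) * (-1) ^ (\<epsilon> * length w) / (real n * real m) ^ N)" .
  have mc': "real (card ?F) * (-1) ^ (\<epsilon> * length w) / (real n * real m) ^ N =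
         (\<Prod>D\<in>orbit ?P ` {..<N}. ((-1) ^ \<epsilon> / real n) ^ (card D - 1))"
    using mc unfolding sg .
  show ?thesis using c unfolding mc' .
qed

theorem mainTheorem2:
  fixes n m \<epsilon> :: nat
  assumes "n \<ge> 1" and "m \<ge> 1" and "\<epsilon> \<in> {0, 1}"
  defines "\<alpha> \<equiv> (\<lambda>i. if \<epsilon> = 0 \<and> i < n then 1 / real n else 0)"
      and "\<beta> \<equiv> (\<lambda>i. if \<epsilon> = 1 \<and> i < n then 1 / real n else 0)"
  shows "is_R_matrix (basisVW n m) (swapV_R \<epsilon>) \<and> thoma_params \<alpha> \<beta> \<and>
         (\<forall>w N. (\<forall>i\<in>set w. i + 1 < N) \<longrightarrow>
            chi_word (basisVW n m) N (swapV_R \<epsilon>) w = complex_of_real (thoma_char \<alpha> \<beta> (perm_of_word w)))"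
proof (intro conjI allI impI)
  show "is_R_matrix (basisVW n m) (swapV_R \<epsilon>)" by (rule is_R)
  show "thoma_params \<alpha> \<beta>" unfolding \<alpha>_def \<beta>_def by (rule thoma_params_ok[OF assms(3,1)])
  fix w :: "nat list" and N :: nat assume wb: "\<forall>i\<in>set w. i + 1 < N"
  show "chi_word (basisVW n m) N (swapV_R \<epsilon>) w = complex_of_real (thoma_char \<alpha> \<beta> (perm_of_word w))"
    unfolding \<alpha>_def \<beta>_def thoma_char_eq[OF assms(3,1) pw_permutes[OF wb]]
    by (rule chi_eq[OF assms(1,2) wb])
qed

end
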